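(* Let $\kappa\ge 1$ be an integer, let $\lambda_1^\Sigma\ge\lambda_2^\Sigma\ge\cdots\ge\lambda_\kappa^\Sigma>0$ and $\lambda_1^G,\dots,\lambda_\kappa^G>0$ be real numbers, and let $X_1,\dots,X_\kappa$ be i.i.d. exponential random variables with unit mean. Define $$X=\frac{\sum_{j=1}^{\kappa}\lambda_j^G(\lambda_j^\Sigma)^2X_j}{1+\sum_{j=1}^{\kappa}\lambda_j^G\lambda_j^\Sigma X_j},$$ and for real $x$ and $j=1,\dots,\kappa$ with $x\neq\lambda_j^\Sigma$ put $c_j(x)=\frac{1}{\lambda_j^G\lambda_j^\Sigma(\lambda_j^\Sigma-x)}$. Set $\lambda_{\kappa+1}^\Sigma:=0$. Then $F_X(x):=\mathbb{P}(X\le x)$ satisfies: $F_X(x)=0$ for $x\le 0$; $F_X(x)=1$ for $x\ge\lambda_1^\Sigma$; and for each $j\in\{1,\dots,\kappa\}$ and each $x$ with $\lambda_{j+1}^\Sigma<x<\lambda_j^\Sigma$ at which $c_1(x),\dots,c_\kappa(x)$ are pairwise distinct, $$F_X(x)=1-\sum_{i=1}^{j}\Bigg(\prod_{\substack{m=1\\ m\neq i}}^{\kappa}\frac{c_m(x)}{c_m(x)-c_i(x)}\Bigg)e^{-c_i(x)\,x}.$$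
   Context: $X$ is the factor of the destination SNR in a dual-hop amplify-and-forward MIMO relay system that accounts for the relay-to-destination link and the relay power allocation: $\lambda_j^\Sigma$ are the nonzero eigenvalues of the relay's antenna correlation matrix in decreasing order and $\lambda_j^G$ are the relay gains allocated to the corresponding eigenmodes. For example, for $\kappa=2$ the formula reads $F_X(x)=1-\frac{c_2}{c_2-c_1}e^{-c_1x}-\frac{c_1}{c_1-c_2}e^{-c_2x}$ for $0<x<\lambda_2^\Sigma$ and $F_X(x)=1-\frac{c_2}{c_2-c_1}e^{-c_1x}$ for $\lambda_2^\Sigma<x<\lambda_1^\Sigma$. *)

theory Defs
  imports "HOL-Probability.Probability"
begin

definition relay_c :: "(nat \<Rightarrow> real) \<Rightarrow> (nat \<Rightarrow> real) \<Rightarrow> nat \<Rightarrow> real \<Rightarrow> real" where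
  "relay_c lS lG j x = 1 / (lG j * lS j * (lS j - x))"

definition relay_X :: "nat \<Rightarrow> (nat \<Rightarrow> real) \<Rightarrow> (nat \<Rightarrow> real) \<Rightarrow> (nat \<Rightarrow> 'a \<Rightarrow> real) \<Rightarrow> 'a \<Rightarrow> real" where
  "relay_X \<kappa> lS lG Xs \<omega> =
     (\<Sum>j=1..\<kappa>. lG j * (lS j)^2 * Xs j \<omega>) / (1 + (\<Sum>j=1..\<kappa>. lG j * lS j * Xs j \<omega>))"

end

theory Submission
  imports Defs "HOL-Computational_Algebra.Polynomial"
begin

lemma lagrange_sum_one:
  fixes c :: "'i \<Rightarrow> real"
  assumes J: "finite J" "J \<noteq> {}" and inj: "inj_on c J"
  shows "(\<Sum>i\<in>J. \<Prod>m\<in>J-{i}. c m / (c m - c i)) = 1"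
proof -
  define p where "p = (\<Sum>i\<in>J. smult (1 / (\<Prod>m\<in>J-{i}. (c m - c i))) (\<Prod>m\<in>J-{i}. [:c m, -1:]))"
  have polyp: "poly p z = (\<Sum>i\<in>J. (\<Prod>m\<in>J-{i}. (c m - z)) / (\<Prod>m\<in>J-{i}. (c m - c i)))" for z
    by (simp add: p_def poly_sum poly_prod)
  have deg: "degree p \<le> card J - 1"
    unfolding p_def
  proof (rule degree_sum_le[OF J(1)])
    fix i assume i: "i \<in> J"
    have "degree (\<Prod>m\<in>J-{i}. [:c m, -1:]) \<le> (\<Sum>m\<in>J-{i}. degree [:c m, -1:])"
      using degree_prod_sum_le[of "J-{i}" "\<lambda>m. [:c m, -1:]"] J by (simp add: o_def)
    also have "\<dots> = card (J - {i})" by simp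
    also have "\<dots> = card J - 1" using i J by simp
    finally show "degree (smult (1 / (\<Prod>m\<in>J-{i}. (c m - c i))) (\<Prod>m\<in>J-{i}. [:c m, -1:])) \<le> card J - 1"
      using degree_smult_le order_trans by blast
  qed
  have ne: "\<And>m i. m \<in> J \<Longrightarrow> i \<in> J \<Longrightarrow> m \<noteq> i \<Longrightarrow> c m - c i \<noteq> 0"
    using inj by (auto simp: inj_on_def)
  have "p = 1"
  proof (rule poly_eqI_degree[where A = "c ` J"])
    fix x assume "x \<in> c ` J"
    then obtain j where j: "j \<in> J" "x = c j" by auto
    have "poly p x = (\<Sum>i\<in>J. if i = j then 1 else 0)"
      unfolding polyp
    proof (rule sum.cong[OF refl])
      fix i assume i: "i \<in> J"
      show "(\<Prod>m\<in>J-{i}. (c m - x)) / (\<Prod>m\<in>J-{i}. (c m - c i)) = (if i = j then 1 else 0)"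
      proof (cases "i = j")
        case True
        have "(\<Prod>m\<in>J-{i}. (c m - c i)) \<noteq> 0" using ne i J by (simp add: prod_zero_iff)
        then show ?thesis using True j by simp
      next
        case False
        have "(\<Prod>m\<in>J-{i}. (c m - x)) = 0" using j False J
          by (intro prod_zero) auto
        then show ?thesis using False by simp
      qed
    qed
    also have "\<dots> = 1" using j J by simp
    finally show "poly p x = poly 1 x" by simp
  next
    have "card (c ` J) = card J" using card_image[OF inj] .
    then show "degree p < card (c ` J)" using deg J by (metis One_nat_def Suc_pred card_gt_0_iff le_imp_less_Suc)
    show "degree (1::real poly) < card (c ` J)" using \<open>card (c ` J) = card J\<close> J by (simp add: card_gt_0_iff)
  qed
  then have "poly p 0 = 1" by simp
  then show ?thesis unfolding polyp by (simp add: prod_dividef)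
qed

lemma hi_exp_interval:
  fixes \<alpha> a b :: real
  assumes "\<alpha> \<noteq> 0" "a \<le> b"
  shows "((\<lambda>y. exp (\<alpha>*y)) has_integral (exp (\<alpha>*b) - exp (\<alpha>*a))/\<alpha>) {a..b}"
proof -
  have "((\<lambda>y. exp (\<alpha>*y)) has_integral (exp (\<alpha>*b)/\<alpha> - exp (\<alpha>*a)/\<alpha>)) {a..b}"
    using assms
    by (intro fundamental_theorem_of_calculus)
       (auto intro!: derivative_eq_intros
             simp flip: has_real_derivative_iff_has_vector_derivative)
  then show ?thesis by (simp add: diff_divide_distrib)
qed

lemma hi_exp_inf:
  fixes \<alpha> a :: real
  assumes "\<alpha> < 0"
  shows "((\<lambda>y. exp (\<alpha>*y)) has_integral - exp (\<alpha>*a)/\<alpha>) {a..}"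
proof -
  have "((\<lambda>x::real. exp (-(-\<alpha>)*x)) has_integral exp (-(-\<alpha>)*a)/(-\<alpha>)) {a..}"
    using assms by (intro has_integral_exp_minus_to_infinity) auto
  then show ?thesis by simp
qed

lemma hi_sum_interval:
  fixes a b :: real
  assumes "finite S" "\<And>i. i \<in> S \<Longrightarrow> \<beta> i \<noteq> 0" "a \<le> b"
  shows "((\<lambda>y. \<Sum>i\<in>S. w i * exp (\<beta> i*y)) has_integral
            (\<Sum>i\<in>S. w i * ((exp (\<beta> i*b) - exp (\<beta> i*a))/\<beta> i))) {a..b}"
  using assms by (intro has_integral_sum has_integral_mult_right hi_exp_interval) auto

lemma hi_sum_inf:
  fixes a :: real
  assumes "finite S" "\<And>i. i \<in> S \<Longrightarrow> \<beta> i < 0"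
  shows "((\<lambda>y. \<Sum>i\<in>S. w i * exp (\<beta> i*y)) has_integral
            (\<Sum>i\<in>S. w i * (- exp (\<beta> i*a)/\<beta> i))) {a..}"
  using assms by (intro has_integral_sum has_integral_mult_right hi_exp_inf) auto

definition Wt :: "'i set \<Rightarrow> ('i \<Rightarrow> real) \<Rightarrow> 'i \<Rightarrow> real" where
  "Wt I c i = (\<Prod>m\<in>I-{i}. c m / (c m - c i))"

definition Fc :: "'i set \<Rightarrow> ('i \<Rightarrow> real) \<Rightarrow> real \<Rightarrow> real" where
  "Fc I c t = (if 0 \<le> t then 1 - (\<Sum>i\<in>{i\<in>I. 0 < c i}. Wt I c i * exp (- c i * t))
               else (\<Sum>i\<in>{i\<in>I. c i < 0}. Wt I c i * exp (- c i * t)))"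

lemma glue:
  fixes f :: "real \<Rightarrow> real"
  assumes "(f has_integral u) {a..T}" "(f has_integral v) {T..}" "a \<le> T"
  shows "(f has_integral (u+v)) {a..}"
proof -
  have "(f has_integral (u+v)) ({a..T} \<union> {T..})"
    by (rule has_integral_Un[OF assms(1,2)]) (auto intro: negligible_subset[OF negligible_sing[of T]])
  moreover have "{a..T} \<union> {T..} = {a..}" using assms(3) by auto
  ultimately show ?thesis by simp
qed

lemma spike1:
  fixes f g :: "real \<Rightarrow> real"
  assumes "(g has_integral u) S" "\<And>y. y \<in> S \<Longrightarrow> y \<noteq> T \<Longrightarrow> f y = g y"
  shows "(f has_integral u) S"
  using has_integral_spike[OF negligible_sing[of T], of S f g u] assms by auto

lemma step_integral:
  fixes c :: "'i \<Rightarrow> real" and t :: real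
  assumes fin: "finite I" and k: "k \<notin> I" and inj: "inj_on c (insert k I)"
    and nz: "\<And>i. i \<in> insert k I \<Longrightarrow> c i \<noteq> 0"
  shows "((\<lambda>y. exp (-y) * Fc I c (t - y / c k)) has_integral Fc (insert k I) c t) {0..}"
proof -
  define P where "P = {i\<in>I. 0 < c i}"
  define N where "N = {i\<in>I. c i < 0}"
  define \<beta> where "\<beta> i = c i / c k - 1" for i
  define V where "V i = Wt (insert k I) c i" for i
  define w where "w i = Wt I c i * exp (- c i * t)" for i
  have ck: "c k \<noteq> 0" using nz by auto
  have finP: "finite P" "finite N" using fin by (auto simp: P_def N_def)
  have PN: "P \<subseteq> I" "N \<subseteq> I" by (auto simp: P_def N_def)
  have cne: "i \<in> I \<Longrightarrow> c i \<noteq> c k" for i using inj k by (auto simp: inj_on_def)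
  have \<beta>ne: "i \<in> I \<Longrightarrow> \<beta> i \<noteq> 0" for i using cne[of i] ck by (auto simp: \<beta>_def field_simps)
  have V: "i \<in> I \<Longrightarrow> V i = Wt I c i * (c k / (c k - c i))" for i
  proof -
    assume i: "i \<in> I"
    have "insert k I - {i} = insert k (I - {i})" using i k by auto
    then show ?thesis using fin k i unfolding V_def Wt_def by (simp add: mult.commute)
  qed
  have wb: "i \<in> I \<Longrightarrow> w i / \<beta> i = - V i * exp (- c i * t)" for i
  proof -
    assume i: "i \<in> I"
    have d: "c k - c i \<noteq> 0" "c i - c k \<noteq> 0" using cne[OF i] by auto
    have b: "\<beta> i = (c i - c k) / c k" using ck by (simp add: \<beta>_def field_simps)
    show ?thesis using d ck unfolding V[OF i] w_def b by (simp add: field_simps)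
  qed
  have eT: "exp (- c i * t) * exp (\<beta> i * (c k * t)) = exp (- c k * t)" for i
  proof -
    have "- c i * t + \<beta> i * (c k * t) = - c k * t" using ck by (simp add: \<beta>_def field_simps)
    then show ?thesis by (simp flip: exp_add)
  qed
  have expid: "exp (-y) * exp (- c i * (t - y / c k)) = exp (- c i * t) * exp (\<beta> i * y)" for i y
  proof -
    have "-y + (- c i * (t - y / c k)) = - c i * t + \<beta> i * y" using ck by (simp add: \<beta>_def field_simps)
    then show ?thesis by (simp flip: exp_add)
  qed
  have sumV: "V k = 1 - (\<Sum>i\<in>P. V i) - (\<Sum>i\<in>N. V i)"
  proof -
    have "(\<Sum>i\<in>insert k I. V i) = 1"
      unfolding V_def Wt_def using lagrange_sum_one[of "insert k I" c] fin inj by auto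
    then have "V k + (\<Sum>i\<in>I. V i) = 1" using fin k by simp
    moreover have "I = P \<union> N" using nz by (force simp: P_def N_def)
    moreover have "P \<inter> N = {}" by (auto simp: P_def N_def)
    ultimately show ?thesis using finP by (simp add: sum.union_disjoint)
  qed
  have pos_eq: "exp (-y) * Fc I c (t - y / c k) = exp (-y) - (\<Sum>i\<in>P. w i * exp (\<beta> i * y))"
    if "0 \<le> t - y / c k" for y
  proof -
    have "exp (-y) * Fc I c (t - y / c k) = exp (-y) * (1 - (\<Sum>i\<in>P. Wt I c i * exp (- c i * (t - y / c k))))"
      using that by (simp add: Fc_def P_def)
    also have "\<dots> = exp (-y) - (\<Sum>i\<in>P. Wt I c i * (exp (-y) * exp (- c i * (t - y / c k))))"
      by (simp add: right_diff_distrib sum_distrib_left algebra_simps)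
    also have "\<dots> = exp (-y) - (\<Sum>i\<in>P. w i * exp (\<beta> i * y))"
      by (simp only: expid w_def mult.assoc)
    finally show ?thesis .
  qed
  have neg_eq: "exp (-y) * Fc I c (t - y / c k) = (\<Sum>i\<in>N. w i * exp (\<beta> i * y))"
    if "\<not> 0 \<le> t - y / c k" for y
  proof -
    have "exp (-y) * Fc I c (t - y / c k) = exp (-y) * (\<Sum>i\<in>N. Wt I c i * exp (- c i * (t - y / c k)))"
      using that by (simp add: Fc_def N_def)
    also have "\<dots> = (\<Sum>i\<in>N. Wt I c i * (exp (-y) * exp (- c i * (t - y / c k))))"
      by (simp add: sum_distrib_left algebra_simps)
    also have "\<dots> = (\<Sum>i\<in>N. w i * exp (\<beta> i * y))"
      by (simp only: expid w_def mult.assoc)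
    finally show ?thesis .
  qed
  have intP: "((\<lambda>y. exp (-y) - (\<Sum>i\<in>P. w i * exp (\<beta> i * y))) has_integral
      ((exp (-1*b) - exp (-1*a))/(-1) - (\<Sum>i\<in>P. w i * ((exp (\<beta> i*b) - exp (\<beta> i*a))/\<beta> i)))) {a..b}"
    if "a \<le> b" for a b
    using has_integral_diff[OF hi_exp_interval[of "-1" a b] hi_sum_interval[OF finP(1), where \<beta>=\<beta> and a=a and b=b and w=w]]
      that \<beta>ne PN by auto
  have intN: "((\<lambda>y. (\<Sum>i\<in>N. w i * exp (\<beta> i * y))) has_integral
      (\<Sum>i\<in>N. w i * ((exp (\<beta> i*b) - exp (\<beta> i*a))/\<beta> i))) {a..b}"
    if "a \<le> b" for a b
    using hi_sum_interval[OF finP(2), where \<beta>=\<beta> and a=a and b=b and w=w] that \<beta>ne PN by auto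
  have intPinf: "((\<lambda>y. exp (-y) - (\<Sum>i\<in>P. w i * exp (\<beta> i * y))) has_integral
      (- exp (-1*a)/(-1) - (\<Sum>i\<in>P. w i * (- exp (\<beta> i*a)/\<beta> i)))) {a..}"
    if "c k < 0" for a
  proof -
    have "\<beta> i < 0" if "i \<in> P" for i
    proof -
      have "c i / c k < 0" using \<open>c k < 0\<close> that by (simp add: P_def divide_pos_neg)
      then show ?thesis by (simp add: \<beta>_def)
    qed
    then show ?thesis
      using has_integral_diff[OF hi_exp_inf[of "-1" a] hi_sum_inf[OF finP(1), where \<beta>=\<beta> and a=a and w=w]] by auto
  qed
  have intNinf: "((\<lambda>y. (\<Sum>i\<in>N. w i * exp (\<beta> i * y))) has_integral
      (\<Sum>i\<in>N. w i * (- exp (\<beta> i*a)/\<beta> i))) {a..}"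
    if "c k > 0" for a
  proof -
    have "\<beta> i < 0" if "i \<in> N" for i
    proof -
      have "c i / c k < 0" using \<open>c k > 0\<close> that by (simp add: N_def divide_neg_pos)
      then show ?thesis by (simp add: \<beta>_def)
    qed
    then show ?thesis
      using hi_sum_inf[OF finP(2), where \<beta>=\<beta> and a=a and w=w] by auto
  qed
  have tI: "w i * ((exp (\<beta> i*b) - exp (\<beta> i*a))/\<beta> i)
      = - V i * (exp (- c i * t) * exp (\<beta> i*b)) + V i * (exp (- c i * t) * exp (\<beta> i*a))"
    if "i \<in> I" for i a b
  proof -
    have "w i * ((exp (\<beta> i*b) - exp (\<beta> i*a))/\<beta> i) = (w i / \<beta> i) * (exp (\<beta> i*b) - exp (\<beta> i*a))"
      by simp
    also have "\<dots> = - V i * (exp (- c i * t) * exp (\<beta> i*b)) + V i * (exp (- c i * t) * exp (\<beta> i*a))"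
      unfolding wb[OF that] by (simp add: algebra_simps)
    finally show ?thesis .
  qed
  have tInf: "w i * (- exp (\<beta> i*a)/\<beta> i) = V i * (exp (- c i * t) * exp (\<beta> i*a))"
    if "i \<in> I" for i a
  proof -
    have "w i * (- exp (\<beta> i*a)/\<beta> i) = - (w i / \<beta> i) * exp (\<beta> i*a)" by simp
    also have "\<dots> = V i * (exp (- c i * t) * exp (\<beta> i*a))"
      unfolding wb[OF that] by (simp add: algebra_simps)
    finally show ?thesis .
  qed
  have FI': "Fc (insert k I) c t = (if 0 \<le> t then 1 - (\<Sum>i\<in>{i\<in>insert k I. 0 < c i}. V i * exp (- c i * t))
               else (\<Sum>i\<in>{i\<in>insert k I. c i < 0}. V i * exp (- c i * t)))"
    by (simp add: Fc_def V_def)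
  consider "c k > 0" "0 \<le> t" | "c k > 0" "t < 0" | "c k < 0" "0 \<le> t" | "c k < 0" "t < 0"
    using ck by force
  then show ?thesis
  proof cases
    case 1
    define T where "T = c k * t"
    have T0: "0 \<le> T" using 1 by (simp add: T_def)
    have h1: "((\<lambda>y. exp (-y) * Fc I c (t - y / c k)) has_integral
      ((exp (-1*T) - exp (-1*0))/(-1) - (\<Sum>i\<in>P. w i * ((exp (\<beta> i*T) - exp (\<beta> i*0))/\<beta> i)))) {0..T}"
    proof (rule spike1[OF intP[OF T0]])
      fix y assume "y \<in> {0..T}"
      then have "y / c k \<le> t" using 1 by (simp add: T_def divide_le_eq mult.commute)
      then show "exp (-y) * Fc I c (t - y / c k) = exp (-y) - (\<Sum>i\<in>P. w i * exp (\<beta> i * y))"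
        by (intro pos_eq) simp
    qed
    have h2: "((\<lambda>y. exp (-y) * Fc I c (t - y / c k)) has_integral
      (\<Sum>i\<in>N. w i * (- exp (\<beta> i*T)/\<beta> i))) {T..}"
    proof (rule spike1[OF intNinf[OF 1(1)], where T=T])
      fix y assume "y \<in> {T..}" "y \<noteq> T"
      then have "y / c k > t" using 1 by (simp add: T_def less_divide_eq mult.commute)
      then show "exp (-y) * Fc I c (t - y / c k) = (\<Sum>i\<in>N. w i * exp (\<beta> i * y))"
        by (intro neg_eq) simp
    qed
    have e1: "(\<Sum>i\<in>P. w i * ((exp (\<beta> i*T) - exp (\<beta> i*0))/\<beta> i)) = 
      (\<Sum>i\<in>P. - V i * exp (- c k * t) + V i * exp (- c i * t))"
    proof (rule sum.cong[OF refl])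
      fix i assume i: "i \<in> P"
      have "w i * ((exp (\<beta> i*T) - exp (\<beta> i*0))/\<beta> i) = - V i * (exp (- c i * t) * exp (\<beta> i*T)) + V i * (exp (- c i * t) * exp (\<beta> i*0))"
        using i PN by (intro tI) auto
      also have "\<dots> = - V i * exp (- c k * t) + V i * exp (- c i * t)"
        unfolding T_def eT by simp
      finally show "w i * ((exp (\<beta> i*T) - exp (\<beta> i*0))/\<beta> i) = - V i * exp (- c k * t) + V i * exp (- c i * t)" .
    qed
    have e2: "(\<Sum>i\<in>N. w i * (- exp (\<beta> i*T)/\<beta> i)) = (\<Sum>i\<in>N. V i * exp (- c k * t))"
    proof (rule sum.cong[OF refl])
      fix i assume i: "i \<in> N"
      have "w i * (- exp (\<beta> i*T)/\<beta> i) = V i * (exp (- c i * t) * exp (\<beta> i*T))"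
        using i PN by (intro tInf) auto
      also have "\<dots> = V i * exp (- c k * t)"
        unfolding T_def eT by simp
      finally show "w i * (- exp (\<beta> i*T)/\<beta> i) = V i * exp (- c k * t)" .
    qed
    have set: "{i\<in>insert k I. 0 < c i} = insert k P" using 1 by (auto simp: P_def)
    have kP: "k \<notin> P" using k by (auto simp: P_def)
    have "(exp (-1*T) - exp (-1*0))/(-1) - (\<Sum>i\<in>P. w i * ((exp (\<beta> i*T) - exp (\<beta> i*0))/\<beta> i))
          + (\<Sum>i\<in>N. w i * (- exp (\<beta> i*T)/\<beta> i)) = Fc (insert k I) c t"
      unfolding FI' e1 e2 set using 1 finP kP
      by (simp add: sumV sum.distrib sum_subtractf sum_negf sum_distrib_right algebra_simps T_def)
    then show ?thesis using glue[OF h1 h2 T0] by simp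
  next
    case 2
    have h: "((\<lambda>y. exp (-y) * Fc I c (t - y / c k)) has_integral
      (\<Sum>i\<in>N. w i * (- exp (\<beta> i*0)/\<beta> i))) {0..}"
    proof (rule spike1[OF intNinf[OF 2(1)], where T=0])
      fix y :: real assume "y \<in> {0..}"
      then have "y / c k \<ge> 0" using 2 by simp
      then show "exp (-y) * Fc I c (t - y / c k) = (\<Sum>i\<in>N. w i * exp (\<beta> i * y))"
        using 2 by (intro neg_eq) simp
    qed
    have e: "(\<Sum>i\<in>N. w i * (- exp (\<beta> i*0)/\<beta> i)) = (\<Sum>i\<in>N. V i * exp (- c i * t))"
    proof (rule sum.cong[OF refl])
      fix i assume i: "i \<in> N"
      have "w i * (- exp (\<beta> i*0)/\<beta> i) = V i * (exp (- c i * t) * exp (\<beta> i*0))"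
        using i PN by (intro tInf) auto
      then show "w i * (- exp (\<beta> i*0)/\<beta> i) = V i * exp (- c i * t)" by simp
    qed
    have set: "{i\<in>insert k I. c i < 0} = N" using 2 by (auto simp: N_def)
    show ?thesis using h unfolding e FI' set using 2 by simp
  next
    case 3
    have h: "((\<lambda>y. exp (-y) * Fc I c (t - y / c k)) has_integral
      (- exp (-1*0)/(-1) - (\<Sum>i\<in>P. w i * (- exp (\<beta> i*0)/\<beta> i)))) {0..}"
    proof (rule spike1[OF intPinf[OF 3(1)], where T=0])
      fix y :: real assume "y \<in> {0..}"
      then have "y / c k \<le> 0" using 3 by (simp add: divide_nonneg_neg)
      then show "exp (-y) * Fc I c (t - y / c k) = exp (-y) - (\<Sum>i\<in>P. w i * exp (\<beta> i * y))"
        using 3 by (intro pos_eq) simp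
    qed
    have e: "(\<Sum>i\<in>P. w i * (- exp (\<beta> i*0)/\<beta> i)) = (\<Sum>i\<in>P. V i * exp (- c i * t))"
    proof (rule sum.cong[OF refl])
      fix i assume i: "i \<in> P"
      have "w i * (- exp (\<beta> i*0)/\<beta> i) = V i * (exp (- c i * t) * exp (\<beta> i*0))"
        using i PN by (intro tInf) auto
      then show "w i * (- exp (\<beta> i*0)/\<beta> i) = V i * exp (- c i * t)" by simp
    qed
    have set: "{i\<in>insert k I. 0 < c i} = P" using 3 by (auto simp: P_def)
    show ?thesis using h unfolding e FI' set using 3 by simp
  next
    case 4
    define T where "T = c k * t"
    have T0: "0 \<le> T" using 4 by (simp add: T_def mult_nonpos_nonpos)
    have h1: "((\<lambda>y. exp (-y) * Fc I c (t - y / c k)) has_integral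
      (\<Sum>i\<in>N. w i * ((exp (\<beta> i*T) - exp (\<beta> i*0))/\<beta> i))) {0..T}"
    proof (rule spike1[OF intN[OF T0], where T=T])
      fix y assume "y \<in> {0..T}" "y \<noteq> T"
      then have "y < c k * t" by (simp add: T_def)
      then have "y / c k > t" using 4 by (simp add: less_divide_eq mult.commute)
      then show "exp (-y) * Fc I c (t - y / c k) = (\<Sum>i\<in>N. w i * exp (\<beta> i * y))"
        by (intro neg_eq) simp
    qed
    have h2: "((\<lambda>y. exp (-y) * Fc I c (t - y / c k)) has_integral
      (- exp (-1*T)/(-1) - (\<Sum>i\<in>P. w i * (- exp (\<beta> i*T)/\<beta> i)))) {T..}"
    proof (rule spike1[OF intPinf[OF 4(1)], where T=T])
      fix y assume "y \<in> {T..}"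
      then have "c k * t \<le> y" by (simp add: T_def)
      then have "y / c k \<le> t" using 4 by (simp add: divide_le_eq mult.commute)
      then show "exp (-y) * Fc I c (t - y / c k) = exp (-y) - (\<Sum>i\<in>P. w i * exp (\<beta> i * y))"
        by (intro pos_eq) simp
    qed
    have e1: "(\<Sum>i\<in>N. w i * ((exp (\<beta> i*T) - exp (\<beta> i*0))/\<beta> i)) = 
      (\<Sum>i\<in>N. - V i * exp (- c k * t) + V i * exp (- c i * t))"
    proof (rule sum.cong[OF refl])
      fix i assume i: "i \<in> N"
      have "w i * ((exp (\<beta> i*T) - exp (\<beta> i*0))/\<beta> i) = - V i * (exp (- c i * t) * exp (\<beta> i*T)) + V i * (exp (- c i * t) * exp (\<beta> i*0))"
        using i PN by (intro tI) auto
      also have "\<dots> = - V i * exp (- c k * t) + V i * exp (- c i * t)"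
        unfolding T_def eT by simp
      finally show "w i * ((exp (\<beta> i*T) - exp (\<beta> i*0))/\<beta> i) = - V i * exp (- c k * t) + V i * exp (- c i * t)" .
    qed
    have e2: "(\<Sum>i\<in>P. w i * (- exp (\<beta> i*T)/\<beta> i)) = (\<Sum>i\<in>P. V i * exp (- c k * t))"
    proof (rule sum.cong[OF refl])
      fix i assume i: "i \<in> P"
      have "w i * (- exp (\<beta> i*T)/\<beta> i) = V i * (exp (- c i * t) * exp (\<beta> i*T))"
        using i PN by (intro tInf) auto
      also have "\<dots> = V i * exp (- c k * t)"
        unfolding T_def eT by simp
      finally show "w i * (- exp (\<beta> i*T)/\<beta> i) = V i * exp (- c k * t)" .
    qed
    have set: "{i\<in>insert k I. c i < 0} = insert k N" using 4 by (auto simp: N_def)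
    have kN: "k \<notin> N" using k by (auto simp: N_def)
    have "(\<Sum>i\<in>N. w i * ((exp (\<beta> i*T) - exp (\<beta> i*0))/\<beta> i))
          + (- exp (-1*T)/(-1) - (\<Sum>i\<in>P. w i * (- exp (\<beta> i*T)/\<beta> i))) = Fc (insert k I) c t"
      unfolding FI' e1 e2 set using 4 finP kN
      by (simp add: sumV sum.distrib sum_subtractf sum_negf sum_distrib_right algebra_simps T_def)
    then show ?thesis using glue[OF h1 h2 T0] by simp
  qed
qed

lemma Fc_meas[measurable]: "(\<lambda>y. Fc I c (f y)) \<in> borel_measurable M" if [measurable]: "f \<in> borel_measurable M"
  unfolding Fc_def by measurable

lemma core:
  fixes c :: "'i \<Rightarrow> real"
  assumes "finite I"
  shows "inj_on c I \<Longrightarrow> (\<And>i. i \<in> I \<Longrightarrow> c i \<noteq> 0) \<Longrightarrow>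
    measure (\<Pi>\<^sub>M i\<in>I. density lborel (exponential_density 1))
      {x \<in> space (\<Pi>\<^sub>M i\<in>I. density lborel (exponential_density 1)).
         (\<forall>m\<in>I. 0 \<le> x m) \<and> (\<Sum>m\<in>I. x m / c m) \<le> t} = Fc I c t"
  using assms
proof (induction I arbitrary: t rule: finite_induct)
  case empty
  then show ?case by (simp add: PiM_empty Fc_def)
next
  case (insert k I)
  define E where "E = density lborel (exponential_density 1)"
  define S where "S J t = {x \<in> space (\<Pi>\<^sub>M i\<in>J. E). (\<forall>m\<in>J. 0 \<le> x m) \<and> (\<Sum>m\<in>J. x m / c m) \<le> t}" for J t
  have IH: "measure (\<Pi>\<^sub>M i\<in>I. E) (S I s) = Fc I c s" for s
    using insert by (auto simp: E_def S_def inj_on_insert)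
  have sE[measurable_cong]: "sets E = sets borel" by (simp add: E_def)
  have SS[measurable]: "S J s \<in> sets (\<Pi>\<^sub>M i\<in>J. E)" if "finite J" for J s
    unfolding S_def using that by measurable
  interpret E: prob_space E unfolding E_def by (rule prob_space_exponential_density) simp
  interpret PS: product_prob_space "\<lambda>_::'i. E" by (rule product_prob_spaceI) (rule E.prob_space_axioms)
  interpret PI: prob_space "\<Pi>\<^sub>M i\<in>I. E" by (rule prob_space_PiM) (rule E.prob_space_axioms)
  have Fnn: "0 \<le> Fc I c s" for s using IH[of s] by (metis measure_nonneg)
  have "emeasure (\<Pi>\<^sub>M i\<in>insert k I. E) (S (insert k I) t) = \<integral>\<^sup>+x. indicator (S (insert k I) t) x \<partial>(\<Pi>\<^sub>M i\<in>insert k I. E)"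
    using insert by simp
  also have "\<dots> = \<integral>\<^sup>+y. \<integral>\<^sup>+x. indicator (S (insert k I) t) (x(k:=y)) \<partial>(\<Pi>\<^sub>M i\<in>I. E) \<partial>E"
    using insert by (intro PS.product_nn_integral_insert_rev) auto
  also have "\<dots> = \<integral>\<^sup>+y. ennreal (indicator {0..} y * Fc I c (t - y / c k)) \<partial>E"
  proof (rule nn_integral_cong)
    fix y assume y: "y \<in> space E"
    have "(\<integral>\<^sup>+x. indicator (S (insert k I) t) (x(k:=y)) \<partial>(\<Pi>\<^sub>M i\<in>I. E))
        = (\<integral>\<^sup>+x. indicator {0..} y * indicator (S I (t - y / c k)) x \<partial>(\<Pi>\<^sub>M i\<in>I. E))"
    proof (rule nn_integral_cong)
      fix x assume x: "x \<in> space (\<Pi>\<^sub>M i\<in>I. E)"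
      have sp: "x(k:=y) \<in> space (\<Pi>\<^sub>M i\<in>insert k I. E)"
        using x y insert(2) by (auto simp: space_PiM PiE_def extensional_def sE)
      have sum: "(\<Sum>m\<in>insert k I. (if m = k then y else x m) / c m) = y / c k + (\<Sum>m\<in>I. x m / c m)"
        using insert(1,2) by (auto intro!: sum.cong)
      have "(x(k:=y) \<in> S (insert k I) t) \<longleftrightarrow> (y \<in> {0..} \<and> x \<in> S I (t - y / c k))"
        using sp x insert(2) sum unfolding S_def by auto
      then show "indicator (S (insert k I) t) (x(k:=y)) = (indicator {0..} y * indicator (S I (t - y / c k)) x :: ennreal)"
        by (auto simp: indicator_def)
    qed
    also have "\<dots> = indicator {0..} y * emeasure (\<Pi>\<^sub>M i\<in>I. E) (S I (t - y / c k))"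
      using insert by (subst nn_integral_cmult_indicator) auto
    also have "\<dots> = ennreal (indicator {0..} y * Fc I c (t - y / c k))"
      by (simp add: PI.emeasure_eq_measure IH indicator_def)
    finally show "(\<integral>\<^sup>+x. indicator (S (insert k I) t) (x(k:=y)) \<partial>(\<Pi>\<^sub>M i\<in>I. E)) = ennreal (indicator {0..} y * Fc I c (t - y / c k))" .
  qed
  also have "\<dots> = \<integral>\<^sup>+y. ennreal (exponential_density 1 y) * ennreal (indicator {0..} y * Fc I c (t - y / c k)) \<partial>lborel"
    unfolding E_def by (subst nn_integral_density) auto
  also have "\<dots> = \<integral>\<^sup>+y. ennreal (indicator {0..} y * (exp (-y) * Fc I c (t - y / c k))) \<partial>lborel"
    by (intro nn_integral_cong) (auto simp: exponential_density_def indicator_def ennreal_mult'[symmetric] Fnn)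
  also have "\<dots> = ennreal (Fc (insert k I) c t)"
  proof (rule nn_integral_has_integral_lebesgue)
    show "((\<lambda>y. exp (-y) * Fc I c (t - y / c k)) has_integral Fc (insert k I) c t) {0..}"
      using insert by (intro step_integral) auto
  qed (simp add: Fnn)
  finally have em: "emeasure (\<Pi>\<^sub>M i\<in>insert k I. E) (S (insert k I) t) = ennreal (Fc (insert k I) c t)" .
  have "0 \<le> Fc (insert k I) c t"
    by (rule has_integral_nonneg[where f="\<lambda>y. exp (-y) * Fc I c (t - y / c k)" and S="{0..}"])
       (use insert in \<open>auto intro!: step_integral simp: Fnn\<close>)
  then have "measure (\<Pi>\<^sub>M i\<in>insert k I. E) (S (insert k I) t) = Fc (insert k I) c t"
    by (simp add: measure_def em)
  then show ?case by (simp add: S_def E_def)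
qed

theorem mainTheorem3:
  fixes M :: "'a measure" and \<kappa> :: nat
    and lS lG :: "nat \<Rightarrow> real" and Xs :: "nat \<Rightarrow> 'a \<Rightarrow> real"
  assumes "prob_space M"
    and "\<kappa> \<ge> 1"
    and "\<And>i j. 1 \<le> i \<Longrightarrow> i \<le> j \<Longrightarrow> j \<le> \<kappa> \<Longrightarrow> lS j \<le> lS i"
    and "lS \<kappa> > 0"
    and "\<And>j. 1 \<le> j \<Longrightarrow> j \<le> \<kappa> \<Longrightarrow> lG j > 0"
    and "prob_space.indep_vars M (\<lambda>_. borel) Xs {1..\<kappa>}"
    and "\<And>j. 1 \<le> j \<Longrightarrow> j \<le> \<kappa> \<Longrightarrow> distributed M lborel (Xs j) (exponential_density 1)"
  shows "(\<forall>x::real. x \<le> 0 \<longrightarrow>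
            measure M {\<omega> \<in> space M. relay_X \<kappa> lS lG Xs \<omega> \<le> x} = 0)
       \<and> (\<forall>x::real. x \<ge> lS 1 \<longrightarrow>
            measure M {\<omega> \<in> space M. relay_X \<kappa> lS lG Xs \<omega> \<le> x} = 1)
       \<and> (\<forall>j \<in> {1..\<kappa>}. \<forall>x::real.
            (if j = \<kappa> then 0 else lS (j + 1)) < x \<and> x < lS j \<and>
            (\<forall>i \<in> {1..\<kappa>}. \<forall>m \<in> {1..\<kappa>}. i \<noteq> m \<longrightarrow> relay_c lS lG i x \<noteq> relay_c lS lG m x)
            \<longrightarrow> measure M {\<omega> \<in> space M. relay_X \<kappa> lS lG Xs \<omega> \<le> x} =
                1 - (\<Sum>i=1..j. (\<Prod>m \<in> {1..\<kappa>} - {i}.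
                        relay_c lS lG m x / (relay_c lS lG m x - relay_c lS lG i x))
                      * exp (- relay_c lS lG i x * x)))"
proof -
  interpret P: prob_space M by fact
  define I where "I = {1..\<kappa>}"
  define E where "E = density lborel (exponential_density 1)"
  note dist = assms(7)
  have lSpos: "\<And>m. m \<in> I \<Longrightarrow> 0 < lS m"
    using assms(3)[of _ \<kappa>] assms(4) by (force simp: I_def)
  have lGpos: "\<And>m. m \<in> I \<Longrightarrow> 0 < lG m" using assms(5) by (auto simp: I_def)
  have meas[measurable]: "Xs m \<in> borel_measurable M" if "m \<in> I" for m
    using distributed_measurable[OF dist[of m]] that by (simp add: I_def)
  have distrE: "distr M borel (Xs m) = E" if "m \<in> I" for m
  proof -
    have "distr M borel (Xs m) = distr M lborel (Xs m)" by (rule distr_cong) auto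
    also have "\<dots> = E" using distributed_distr_eq_density[OF dist[of m]] that by (simp add: E_def I_def)
    finally show ?thesis .
  qed
  have AEnn: "AE \<omega> in M. \<forall>m\<in>I. 0 \<le> Xs m \<omega>"
  proof (rule AE_finite_allI)
    show "finite I" by (simp add: I_def)
    fix m assume m: "m \<in> I"
    have dm: "(\<lambda>y. ennreal (exponential_density 1 y)) \<in> borel_measurable lborel"
      by (simp add: exponential_density_def)
    have "AE y in lborel. 0 < ennreal (exponential_density 1 y) \<longrightarrow> 0 \<le> y"
    proof (rule AE_I2, rule impI)
      fix y :: real assume "0 < ennreal (exponential_density 1 y)"
      then show "0 \<le> y" by (cases "y < 0") (simp_all add: exponential_density_def)
    qed
    then have "AE y in E. 0 \<le> y"
      unfolding E_def using AE_density[OF dm] by blast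
    then have "AE y in distr M borel (Xs m). 0 \<le> y"
      by (simp only: distrE[OF m])
    then show "AE \<omega> in M. 0 \<le> Xs m \<omega>" using AE_distrD[OF meas[OF m]] by blast
  qed
  have termnn: "0 \<le> lG m * lS m * z \<and> 0 \<le> lG m * (lS m)^2 * z" if "1 \<le> m" "m \<le> \<kappa>" "0 \<le> z" for m z
  proof -
    have "m \<in> I" using that by (simp add: I_def)
    then have "0 < lG m" "0 < lS m" using lSpos lGpos by auto
    then show ?thesis using that by simp
  qed
  define A where "A \<omega> = (\<Sum>j=1..\<kappa>. lG j * (lS j)^2 * Xs j \<omega>)" for \<omega>
  define B where "B \<omega> = (\<Sum>j=1..\<kappa>. lG j * lS j * Xs j \<omega>)" for \<omega>
  have relay: "relay_X \<kappa> lS lG Xs \<omega> = A \<omega> / (1 + B \<omega>)" for \<omega>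
    by (simp add: relay_X_def A_def B_def)
  have Bnn: "0 \<le> B \<omega>" if "\<forall>m\<in>I. 0 \<le> Xs m \<omega>" for \<omega>
    unfolding B_def
  proof (intro sum_nonneg)
    fix m assume "m \<in> {1..\<kappa>}"
    then have "m \<in> I" by (simp add: I_def)
    then have "0 < lG m" "0 < lS m" "0 \<le> Xs m \<omega>" using that lSpos lGpos by auto
    then show "0 \<le> lG m * lS m * Xs m \<omega>" by simp
  qed
  have relay_le: "relay_X \<kappa> lS lG Xs \<omega> \<le> x \<longleftrightarrow> A \<omega> \<le> x * (1 + B \<omega>)"
    if "\<forall>m\<in>I. 0 \<le> Xs m \<omega>" for \<omega> x
  proof -
    have "0 < 1 + B \<omega>" using Bnn[OF that] by simp
    then show ?thesis unfolding relay by (simp add: divide_le_eq mult.commute)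
  qed
  let ?R = "\<lambda>x. {\<omega> \<in> space M. relay_X \<kappa> lS lG Xs \<omega> \<le> x}"
  have Rs[measurable]: "?R x \<in> sets M" for x
  proof -
    have [measurable]: "Xs m \<in> borel_measurable M" if "1 \<le> m" "m \<le> \<kappa>" for m
      using meas that by (simp add: I_def)
    show ?thesis unfolding relay_X_def by measurable
  qed
  have P1: "measure M (?R x) = 0" if x0: "x \<le> 0" for x
  proof -
    have "measure M (?R x) \<le> measure M {\<omega>\<in>space M. Xs 1 \<omega> \<le> 0}"
    proof (rule P.finite_measure_mono_AE)
      have "1 \<in> I" using assms(2) by (simp add: I_def)
      show "{\<omega>\<in>space M. Xs 1 \<omega> \<le> 0} \<in> sets M" using meas[OF \<open>1 \<in> I\<close>] by measurable
      show "AE \<omega> in M. \<omega> \<in> ?R x \<longrightarrow> \<omega> \<in> {\<omega>\<in>space M. Xs 1 \<omega> \<le> 0}"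
        using AEnn
      proof eventually_elim
        case (elim \<omega>)
        show ?case
        proof
          assume R: "\<omega> \<in> ?R x"
          have "A \<omega> \<le> x * (1 + B \<omega>)" using R relay_le[OF elim] by auto
          also have "\<dots> \<le> 0" using x0 Bnn[OF elim] by (simp add: mult_nonpos_nonneg)
          finally have A0: "A \<omega> \<le> 0" .
          have "lG 1 * (lS 1)^2 * Xs 1 \<omega> \<le> A \<omega>"
            unfolding A_def using assms(2) elim termnn
            by (intro member_le_sum) (auto simp: I_def)
          then have "lG 1 * (lS 1)^2 * Xs 1 \<omega> \<le> 0" using A0 by linarith
          moreover have "0 < lG 1 * (lS 1)^2" using lSpos[OF \<open>1 \<in> I\<close>] lGpos[OF \<open>1 \<in> I\<close>] by simp
          ultimately have "Xs 1 \<omega> \<le> 0"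
            using mult_le_cancel_left_pos[of "lG 1 * (lS 1)^2" "Xs 1 \<omega>" 0] by simp
          then show "\<omega> \<in> {\<omega>\<in>space M. Xs 1 \<omega> \<le> 0}" using R by simp
        qed
      qed
    qed
    also have "measure M {\<omega>\<in>space M. Xs 1 \<omega> \<le> 0} = 0"
      using P.exponential_distributedD_le[OF dist[of 1], of 0] assms(2) by simp
    finally show ?thesis using measure_nonneg[of M "?R x"] by linarith
  qed
  have P2: "measure M (?R x) = 1" if x1: "lS 1 \<le> x" for x
  proof -
    have "1 \<in> I" using assms(2) by (simp add: I_def)
    have "measure M (?R x) = measure M (space M)"
    proof (rule measure_eq_AE)
      show "AE \<omega> in M. \<omega> \<in> ?R x \<longleftrightarrow> \<omega> \<in> space M"
        using AEnn AE_space
      proof eventually_elim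
        case (elim \<omega>)
        have "A \<omega> = (\<Sum>j=1..\<kappa>. lS j * (lG j * lS j * Xs j \<omega>))"
          unfolding A_def by (intro sum.cong) (auto simp: power2_eq_square)
        also have "\<dots> \<le> (\<Sum>j=1..\<kappa>. lS 1 * (lG j * lS j * Xs j \<omega>))"
        proof (rule sum_mono)
          fix j assume j: "j \<in> {1..\<kappa>}"
          have "0 \<le> lG j * lS j * Xs j \<omega>" using j elim termnn by (auto simp: I_def)
          moreover have "lS j \<le> lS 1" using j assms(3)[of 1 j] by auto
          ultimately show "lS j * (lG j * lS j * Xs j \<omega>) \<le> lS 1 * (lG j * lS j * Xs j \<omega>)"
            by (rule mult_right_mono[rotated])
        qed
        also have "\<dots> = lS 1 * B \<omega>" unfolding B_def by (simp add: sum_distrib_left)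
        also have "\<dots> \<le> x * B \<omega>" using x1 Bnn[OF elim(1)] by (rule mult_right_mono)
        also have "\<dots> \<le> x * (1 + B \<omega>)" using x1 lSpos[OF \<open>1 \<in> I\<close>] by (simp add: algebra_simps)
        finally show ?case using relay_le[OF elim(1)] elim(2) by auto
      qed
    qed auto
    then show ?thesis by (simp add: P.prob_space)
  qed
  have finI: "finite I" by (simp add: I_def)
  define f where "f \<omega> = (\<lambda>i\<in>I. Xs i \<omega>)" for \<omega>
  have sEb[measurable_cong]: "sets E = sets borel" by (simp add: E_def)
  have f_meas: "f \<in> measurable M (\<Pi>\<^sub>M i\<in>I. E)"
    unfolding f_def by (intro measurable_restrict) (simp add: measurable_cong_sets[OF refl sEb] meas)
  have dist_eq: "distr M (\<Pi>\<^sub>M i\<in>I. E) f = (\<Pi>\<^sub>M i\<in>I. E)"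
  proof -
    have "distr M (\<Pi>\<^sub>M i\<in>I. borel) f = (\<Pi>\<^sub>M i\<in>I. distr M borel (Xs i))"
      unfolding f_def
      using P.indep_vars_iff_distr_eq_PiM'[where I=I and M'="\<lambda>_. borel" and X=Xs] assms(6) assms(2) meas
      by (auto simp: I_def)
    also have "\<dots> = (\<Pi>\<^sub>M i\<in>I. E)" by (intro PiM_cong refl) (simp add: distrE)
    finally have *: "distr M (\<Pi>\<^sub>M i\<in>I. borel) f = (\<Pi>\<^sub>M i\<in>I. E)" .
    have "distr M (\<Pi>\<^sub>M i\<in>I. E) f = distr M (\<Pi>\<^sub>M i\<in>I. borel) f"
      by (intro distr_cong refl sets_PiM_cong) (simp add: sEb)
    then show ?thesis using * by simp
  qed
  have P3: "measure M (?R x) = 1 - (\<Sum>i=1..j. (\<Prod>m \<in> {1..\<kappa>} - {i}.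
                        relay_c lS lG m x / (relay_c lS lG m x - relay_c lS lG i x))
                      * exp (- relay_c lS lG i x * x))"
    if j: "j \<in> {1..\<kappa>}" and xl: "(if j = \<kappa> then 0 else lS (j + 1)) < x" and xu: "x < lS j"
      and dis: "\<forall>i \<in> {1..\<kappa>}. \<forall>m \<in> {1..\<kappa>}. i \<noteq> m \<longrightarrow> relay_c lS lG i x \<noteq> relay_c lS lG m x"
    for j x
  proof -
    define c where "c m = relay_c lS lG m x" for m
    have x0: "0 < x"
    proof (cases "j = \<kappa>")
      case False
      then have "0 < lS (j+1)" using j lSpos by (auto simp: I_def)
      then show ?thesis using xl False by simp
    qed (use xl in simp)
    have side: "m \<le> j \<longleftrightarrow> x < lS m" if m: "m \<in> I" for m
    proof
      assume "m \<le> j" then show "x < lS m" using assms(3)[of m j] j m xu by (auto simp: I_def)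
    next
      assume xm: "x < lS m"
      show "m \<le> j"
      proof (rule ccontr)
        assume "\<not> m \<le> j"
        then have "j \<noteq> \<kappa>" "j + 1 \<le> m" using m by (auto simp: I_def)
        then have "lS m \<le> lS (j+1)" using assms(3)[of "j+1" m] m by (auto simp: I_def)
        then show False using xl xm \<open>j \<noteq> \<kappa>\<close> by simp
      qed
    qed
    have cne: "lS m \<noteq> x" if m: "m \<in> I" for m
    proof
      assume "lS m = x"
      then have "\<not> m \<le> j" using side[OF m] by simp
      then have "j \<noteq> \<kappa>" "j + 1 \<le> m" using m by (auto simp: I_def)
      then have "lS m \<le> lS (j+1)" using assms(3)[of "j+1" m] m by (auto simp: I_def)
      then show False using xl \<open>lS m = x\<close> \<open>j \<noteq> \<kappa>\<close> by simp
    qed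
    have cpos: "0 < c m \<longleftrightarrow> m \<le> j" if m: "m \<in> I" for m
    proof -
      have "0 < lG m * lS m" using lSpos[OF m] lGpos[OF m] by simp
      have "0 < c m \<longleftrightarrow> 0 < (lG m * lS m) * (lS m - x)"
        unfolding c_def relay_c_def by (simp only: zero_less_divide_1_iff)
      also have "\<dots> \<longleftrightarrow> 0 < lS m - x"
        using \<open>0 < lG m * lS m\<close> by (metis zero_less_mult_pos mult_pos_pos)
      finally have "0 < c m \<longleftrightarrow> 0 < lS m - x" .
      then show ?thesis using side[OF m] by simp
    qed
    have cnz: "c m \<noteq> 0" if m: "m \<in> I" for m
      using cne[OF m] lSpos[OF m] lGpos[OF m] by (simp add: c_def relay_c_def)
    have inj: "inj_on c I" unfolding inj_on_def c_def I_def using dis by metis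
    have div: "Xs m \<omega> / c m = Xs m \<omega> * (lG m * lS m * (lS m - x))" for m \<omega>
      by (simp add: c_def relay_c_def)
    have sumeq: "(\<Sum>m\<in>I. Xs m \<omega> / c m) = A \<omega> - x * B \<omega>" for \<omega>
      unfolding div A_def B_def I_def
      by (simp add: sum_subtractf[symmetric] sum_distrib_left algebra_simps power2_eq_square)
    define Q where "Q = {\<omega> \<in> space M. (\<forall>m\<in>I. 0 \<le> Xs m \<omega>) \<and> (\<Sum>m\<in>I. Xs m \<omega> / c m) \<le> x}"
    define S where "S = {z \<in> space (\<Pi>\<^sub>M i\<in>I. E). (\<forall>m\<in>I. 0 \<le> z m) \<and> (\<Sum>m\<in>I. z m / c m) \<le> x}"
    have Ss: "S \<in> sets (\<Pi>\<^sub>M i\<in>I. E)" unfolding S_def using finI by measurable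
    have QS: "Q = f -` S \<inter> space M"
      using measurable_space[OF f_meas] by (auto simp: Q_def S_def f_def)
    have Qs: "Q \<in> sets M" unfolding QS using f_meas Ss by (rule measurable_sets)
    have "measure M (?R x) = measure M Q"
    proof (rule measure_eq_AE)
      show "AE \<omega> in M. \<omega> \<in> ?R x \<longleftrightarrow> \<omega> \<in> Q"
        using AEnn
      proof eventually_elim
        case (elim \<omega>)
        show ?case using relay_le[OF elim, of x] elim unfolding Q_def sumeq
          by (auto simp: algebra_simps)
      qed
    qed (use Qs in auto)
    also have "Q = f -` S \<inter> space M" by (rule QS)
    also have "measure M \<dots> = measure (distr M (\<Pi>\<^sub>M i\<in>I. E) f) S"
      by (rule measure_distr[symmetric, OF f_meas Ss])
    also have "\<dots> = measure (\<Pi>\<^sub>M i\<in>I. E) S" by (simp add: dist_eq)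
    also have "\<dots> = Fc I c x"
      unfolding S_def E_def using core[OF finI inj] cnz by blast
    also have "\<dots> = 1 - (\<Sum>i\<in>{1..j}. Wt I c i * exp (- c i * x))"
    proof -
      have "{i\<in>I. 0 < c i} = {1..j}" using cpos j by (auto simp: I_def)
      then show ?thesis using x0 by (simp add: Fc_def)
    qed
    finally show ?thesis by (simp add: Wt_def c_def I_def)
  qed
  show ?thesis using P1 P2 P3 by blast
qed

end
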